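(* Let $n\ge1$ and let $\mathcal{ORCT}_n$ be the semigroup of all full contractions of $[n]=\{1,\dots,n\}$ that are either order-preserving or order-reversing. Let $\textnormal{E}(\mathcal{ORCT}_n)=\{\alpha\in\mathcal{ORCT}_n:\alpha^2=\alpha\}$ be its set of idempotents. Then $|\textnormal{E}(\mathcal{ORCT}_n)|=\frac{n(n+1)}{2}$.
   Context: $\mathcal{T}_n$ is the semigroup (under composition) of all maps $[n]\to[n]$. A map $\alpha\in\mathcal{T}_n$ is a contraction if $|x\alpha-y\alpha|\le |x-y|$ for all $x,y\in[n]$; it is order-preserving if $x\le y$ implies $x\alpha\le y\alpha$, and order-reversing if $x\le y$ implies $x\alpha\ge y\alpha$. $\mathcal{ORCT}_n$ is the set of contractions that are order-preserving or order-reversing. *)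

theory Defs
  imports "HOL-Library.FuncSet"
begin

definition full_trans :: "nat \<Rightarrow> (nat \<Rightarrow> nat) set" where
  "full_trans n = ({1..n} \<rightarrow>\<^sub>E {1..n})"

definition is_contraction :: "nat \<Rightarrow> (nat \<Rightarrow> nat) \<Rightarrow> bool" where
  "is_contraction n f \<longleftrightarrow>
     (\<forall>x\<in>{1..n}. \<forall>y\<in>{1..n}. \<bar>int (f x) - int (f y)\<bar> \<le> \<bar>int x - int y\<bar>)"

definition order_preserving :: "nat \<Rightarrow> (nat \<Rightarrow> nat) \<Rightarrow> bool" where
  "order_preserving n f \<longleftrightarrow> (\<forall>x\<in>{1..n}. \<forall>y\<in>{1..n}. x \<le> y \<longrightarrow> f x \<le> f y)"

definition order_reversing :: "nat \<Rightarrow> (nat \<Rightarrow> nat) \<Rightarrow> bool" where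
  "order_reversing n f \<longleftrightarrow> (\<forall>x\<in>{1..n}. \<forall>y\<in>{1..n}. x \<le> y \<longrightarrow> f x \<ge> f y)"

definition ORCT :: "nat \<Rightarrow> (nat \<Rightarrow> nat) set" where
  "ORCT n = {f \<in> full_trans n. is_contraction n f \<and>
                 (order_preserving n f \<or> order_reversing n f)}"

definition idempotents_ORCT :: "nat \<Rightarrow> (nat \<Rightarrow> nat) set" where
  "idempotents_ORCT n = {f \<in> ORCT n. compose {1..n} f f = f}"

end

theory Submission
  imports Defs
begin

definition clampf :: "nat \<Rightarrow> nat \<Rightarrow> nat \<Rightarrow> nat \<Rightarrow> nat" where
  "clampf n a b = restrict (\<lambda>x. max a (min b x)) {1..n}"

definition pairsP :: "nat \<Rightarrow> (nat \<times> nat) set" where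
  "pairsP n = {(a,b). 1 \<le> a \<and> a \<le> b \<and> b \<le> n}"

lemma pairsP_Suc: "pairsP (Suc n) = pairsP n \<union> (\<lambda>a. (a, Suc n)) ` {1..Suc n}"
  unfolding pairsP_def by (auto simp: le_Suc_eq)

lemma pairsP_fin: "finite (pairsP n)"
  by (rule finite_subset[of _ "{1..n} \<times> {1..n}"]) (auto simp: pairsP_def)

lemma card_pairsP: "card (pairsP n) = n * (n + 1) div 2"
proof (induction n)
  case 0
  have "pairsP 0 = {}" by (auto simp: pairsP_def)
  then show ?case by simp
next
  case (Suc n)
  have d: "pairsP n \<inter> (\<lambda>a. (a, Suc n)) ` {1..Suc n} = {}"
    by (auto simp: pairsP_def)
  have "card ((\<lambda>a. (a, Suc n)) ` {1..Suc n}) = Suc n"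
    by (subst card_image) (auto simp: inj_on_def)
  then have "card (pairsP (Suc n)) = n * (n + 1) div 2 + Suc n"
    unfolding pairsP_Suc using Suc d pairsP_fin by (simp add: card_Un_disjoint)
  then show ?case by simp
qed

lemma clamp_in:
  assumes "(a,b) \<in> pairsP n"
  shows "clampf n a b \<in> idempotents_ORCT n"
proof -
  have p: "1 \<le> a" "a \<le> b" "b \<le> n" using assms by (auto simp: pairsP_def)
  let ?f = "clampf n a b"
  have fe: "?f \<in> full_trans n" using p by (auto simp: full_trans_def clampf_def)
  have c: "is_contraction n ?f"
    unfolding is_contraction_def clampf_def by (auto simp: max_def min_def)
  have o: "order_preserving n ?f"
    unfolding order_preserving_def clampf_def by auto
  have i: "compose {1..n} ?f ?f = ?f"
  proof
    fix x show "compose {1..n} ?f ?f x = ?f x"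
      using p by (cases "x \<in> {1..n}") (auto simp: compose_def clampf_def)
  qed
  show ?thesis using fe c o i by (simp add: idempotents_ORCT_def ORCT_def)
qed

lemma idem_is_clamp:
  assumes f: "f \<in> idempotents_ORCT n" and n: "n \<ge> 1"
  shows "f = clampf n (f 1) (f n) \<and> (f 1, f n) \<in> pairsP n"
proof -
  have fe: "f \<in> {1..n} \<rightarrow>\<^sub>E {1..n}" and c: "is_contraction n f"
    and o: "order_preserving n f \<or> order_reversing n f"
    and id: "compose {1..n} f f = f"
    using f unfolding idempotents_ORCT_def ORCT_def full_trans_def by auto
  have idx: "f (f x) = f x" if "x \<in> {1..n}" for x
    using id that by (metis compose_eq)
  have rng: "f x \<in> {1..n}" if "x \<in> {1..n}" for x using fe that by auto
  have ext: "f x = undefined" if "x \<notin> {1..n}" for x using fe that by auto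
  have n1: "1 \<in> {1..n}" "n \<in> {1..n}" using n by auto
  define a where "a = f 1"
  define b where "b = f n"
  have fa: "f a = a" unfolding a_def using idx n1 by simp
  have fb: "f b = b" unfolding b_def using idx n1 by simp
  have ar: "a \<in> {1..n}" "b \<in> {1..n}" unfolding a_def b_def using rng n1 by auto
  have cc: "\<bar>int (f x) - int (f y)\<bar> \<le> \<bar>int x - int y\<bar>" if "x \<in> {1..n}" "y \<in> {1..n}" for x y
    using c that unfolding is_contraction_def by blast
  show ?thesis
    using o
  proof
    assume op: "order_preserving n f"
    have mo: "f x \<le> f y" if "x \<in> {1..n}" "y \<in> {1..n}" "x \<le> y" for x y
      using op that unfolding order_preserving_def by blast
    have ab: "a \<le> b" unfolding a_def b_def using mo n1 n by auto
    have "f x = max a (min b x)" if x: "x \<in> {1..n}" for x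
    proof -
      have lo: "a \<le> f x" "f x \<le> b" unfolding a_def b_def using mo n1 x by auto
      consider "x < a" | "a \<le> x \<and> x \<le> b" | "b < x" by linarith
      then show ?thesis
      proof cases
        case 1
        then have "f x \<le> f a" using mo x ar by auto
        then show ?thesis using 1 lo fa ab by auto
      next
        case 2
        have "\<bar>int (f x) - int (f a)\<bar> \<le> \<bar>int x - int a\<bar>"
             "\<bar>int (f x) - int (f b)\<bar> \<le> \<bar>int x - int b\<bar>"
          using cc x ar by auto
        then show ?thesis using 2 fa fb lo by auto
      next
        case 3
        then have "f b \<le> f x" using mo x ar by auto
        then show ?thesis using 3 lo fb ab by auto
      qed
    qed
    then have "f = clampf n a b" unfolding clampf_def using ext by (auto simp: fun_eq_iff)
    then show ?thesis using ab ar unfolding a_def b_def pairsP_def by auto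
  next
    assume orv: "order_reversing n f"
    have mo: "f x \<ge> f y" if "x \<in> {1..n}" "y \<in> {1..n}" "x \<le> y" for x y
      using orv that unfolding order_reversing_def by blast
    have ba: "b \<le> a" unfolding a_def b_def using mo n1 n by auto
    have "f b \<ge> f a" using mo ar ba by auto
    then have ab: "a = b" using fa fb ba by auto
    have "f x = max a (min b x)" if x: "x \<in> {1..n}" for x
    proof -
      have "f x \<le> a" "b \<le> f x" unfolding a_def b_def using mo n1 x by auto
      then show ?thesis using ab by auto
    qed
    then have "f = clampf n a b" unfolding clampf_def using ext by (auto simp: fun_eq_iff)
    then show ?thesis using ab ar unfolding a_def b_def pairsP_def by auto
  qed
qed

theorem theorem4:
  fixes n :: nat
  assumes "n \<ge> 1"
  shows "card (idempotents_ORCT n) = n * (n + 1) div 2"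
proof -
  have eq: "idempotents_ORCT n = (\<lambda>(a,b). clampf n a b) ` pairsP n"
  proof
    show "idempotents_ORCT n \<subseteq> (\<lambda>(a,b). clampf n a b) ` pairsP n"
    proof
      fix f assume "f \<in> idempotents_ORCT n"
      from idem_is_clamp[OF this assms] show "f \<in> (\<lambda>(a,b). clampf n a b) ` pairsP n"
        by (metis (no_types, lifting) case_prod_conv image_eqI)
    qed
    show "(\<lambda>(a,b). clampf n a b) ` pairsP n \<subseteq> idempotents_ORCT n"
      using clamp_in by auto
  qed
  have inj: "inj_on (\<lambda>(a,b). clampf n a b) (pairsP n)"
  proof (rule inj_onI, clarify)
    fix a b c d assume p: "(a,b) \<in> pairsP n" "(c,d) \<in> pairsP n"
      and e: "clampf n a b = clampf n c d"
    have "clampf n a b 1 = clampf n c d 1" "clampf n a b n = clampf n c d n" using e by auto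
    then show "a = c \<and> b = d" using p assms unfolding clampf_def pairsP_def by auto
  qed
  show ?thesis unfolding eq using card_image[OF inj] card_pairsP by simp
qed

end
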